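(* Let $G(\mathcal V,\mathcal E)$ be a finite simple directed graph with $|\mathcal V|\ge 2$ and let $f>0$ be an integer. Suppose that for every partition $X,Y,Z$ of $\mathcal V$ with $X,Y$ non-empty and $|Z|\le f$, either $X \Rightarrow_{\mathcal V - Z} Y$ or $Y \Rightarrow_{\mathcal V - Z} X$. Let $F\subseteq\mathcal V$ with $|F|\le f$, and let $A,B$ be a partition of $\mathcal V-F$ into non-empty sets with $A \Rightarrow_{\mathcal V - F} B$. Then: (1) if it is not the case that $B \Rightarrow_{\mathcal V - F} A$, there exists a non-empty set $S\subseteq A$ such that $S \Rightarrow_{\mathcal V - F} \mathcal V-F-S$ and $S$ is strongly connected in $G_{-F}$; (2) if $B \Rightarrow_{\mathcal V - F} A$, there exists a non-empty set $S\subseteq A\cup B$ such that $S \Rightarrow_{\mathcal V - F} \mathcal V-F-S$, $S$ is strongly connected in $G_{-F}$, and $A \Rightarrow_{\mathcal V - F} S-A$; (3) every node of $F$ has at least $f+1$ incoming neighbors in $\mathcal V-F$.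
   Context: An $(X,y)$-path is a directed path from some node of $X$ to the node $y\notin X$; it excludes $F$ if it contains no node of $F$; $(X,y)$-paths are disjoint if they pairwise share only $y$. For pairwise disjoint $X,Y,F\subseteq\mathcal V$ with $|F|\le f$, $X \Rightarrow_{\mathcal V - F} Y$ means: $Y=\emptyset$, or every $y\in Y$ has at least $f+1$ pairwise disjoint $(X,y)$-paths excluding $F$. $G_{-F}$ is the graph obtained from $G$ by deleting the nodes of $F$ and all edges incident to them. A set $S\subseteq\mathcal V-F$ is strongly connected in $G_{-F}$ if for all $i,j\in S$ there is a directed $(i,j)$-path in $G_{-F}$. A node $i$ is an incoming neighbor of $k$ if $(i,k)\in\mathcal E$. *)

theory Defs
  imports Main
begin

definition dpath :: "('a \<times> 'a) set \<Rightarrow> 'a list \<Rightarrow> 'a \<Rightarrow> 'a \<Rightarrow> bool" where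
  "dpath E p x y \<longleftrightarrow> p \<noteq> [] \<and> hd p = x \<and> last p = y \<and> distinct p \<and>
     (\<forall>i. Suc i < length p \<longrightarrow> (p ! i, p ! Suc i) \<in> E)"

definition XY_path_excl :: "('a \<times> 'a) set \<Rightarrow> 'a set \<Rightarrow> 'a \<Rightarrow> 'a set \<Rightarrow> 'a list \<Rightarrow> bool" where
  "XY_path_excl E X y F p \<longleftrightarrow> y \<notin> X \<and> (\<exists>x\<in>X. dpath E p x y) \<and> set p \<inter> F = {}"

definition reach :: "('a \<times> 'a) set \<Rightarrow> nat \<Rightarrow> 'a set \<Rightarrow> 'a set \<Rightarrow> 'a set \<Rightarrow> bool" where
  "reach E f X Y F \<longleftrightarrow> Y = {} \<or>
     (\<forall>y\<in>Y. \<exists>P. finite P \<and> card P \<ge> f + 1 \<and> (\<forall>p\<in>P. XY_path_excl E X y F p) \<and>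
        (\<forall>p\<in>P. \<forall>q\<in>P. p \<noteq> q \<longrightarrow> set p \<inter> set q = {y}))"

definition strongly_conn_minus :: "('a \<times> 'a) set \<Rightarrow> 'a set \<Rightarrow> 'a set \<Rightarrow> bool" where
  "strongly_conn_minus E F S \<longleftrightarrow>
     (\<forall>i\<in>S. \<forall>j\<in>S. \<exists>p. dpath E p i j \<and> set p \<inter> F = {})"

end

theory Submission
  imports Defs
begin

abbreviation wk :: "('a \<times> 'a) set \<Rightarrow> 'a list \<Rightarrow> bool" where
  "wk Es p \<equiv> successively (\<lambda>u v. (u,v) \<in> Es) p"

definition abp :: "('a \<times> 'a) set \<Rightarrow> 'a set \<Rightarrow> 'a set \<Rightarrow> 'a set \<Rightarrow> 'a list \<Rightarrow> bool" where
  "abp Es W A B p \<longleftrightarrow> p \<noteq> [] \<and> distinct p \<and> set p \<subseteq> W \<and> wk Es p \<and> hd p \<in> A \<and> last p \<in> B"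

definition sep :: "('a \<times> 'a) set \<Rightarrow> 'a set \<Rightarrow> 'a set \<Rightarrow> 'a set \<Rightarrow> 'a set \<Rightarrow> bool" where
  "sep Es W A B S \<longleftrightarrow> (\<forall>p. abp Es W A B p \<longrightarrow> set p \<inter> S \<noteq> {})"

definition pdisj :: "'a list set \<Rightarrow> bool" where
  "pdisj P \<longleftrightarrow> (\<forall>p\<in>P. \<forall>q\<in>P. p \<noteq> q \<longrightarrow> set p \<inter> set q = {})"

lemma wk_mono: "wk Es p \<Longrightarrow> Es \<subseteq> Es' \<Longrightarrow> wk Es' p"
  by (erule successively_mono) auto

lemma walk_to_path:
  assumes "wk Es w" "w \<noteq> []"
  shows "\<exists>p. p \<noteq> [] \<and> distinct p \<and> wk Es p \<and> hd p = hd w \<and> last p = last w \<and> set p \<subseteq> set w"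
  using assms
proof (induction "length w" arbitrary: w rule: less_induct)
  case less
  show ?case
  proof (cases "distinct w")
    case True
    then show ?thesis using less.prems by blast
  next
    case False
    then obtain xs ys zs y where w: "w = xs@[y]@ys@[y]@zs"
      using not_distinct_decomp by blast
    let ?w = "xs @ [y] @ zs"
    have "wk Es ?w" using less.prems(1) unfolding w
      by (auto simp: successively_append_iff successively_Cons)
    moreover have "length ?w < length w" using w by simp
    ultimately obtain p where p: "p \<noteq> [] \<and> distinct p \<and> wk Es p \<and> hd p = hd ?w \<and> last p = last ?w \<and> set p \<subseteq> set ?w"
      using less.hyps by blast
    have "hd ?w = hd w" using w by (cases xs) auto
    moreover have "last ?w = last w" using w by (cases zs) auto
    moreover have "set ?w \<subseteq> set w" using w by auto
    ultimately show ?thesis using p by auto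
  qed
qed

lemma sep_walk:
  assumes "sep Es W A B S" "w \<noteq> []" "wk Es w" "set w \<subseteq> W" "hd w \<in> A" "last w \<in> B"
  shows "set w \<inter> S \<noteq> {}"
proof -
  obtain p where p: "p \<noteq> [] \<and> distinct p \<and> wk Es p \<and> hd p = hd w \<and> last p = last w \<and> set p \<subseteq> set w"
    using walk_to_path assms(2,3) by blast
  then have "abp Es W A B p" using assms unfolding abp_def by auto
  then have "set p \<inter> S \<noteq> {}" using assms(1) unfolding sep_def by blast
  then show ?thesis using p by blast
qed

lemma wk_remove_out: "wk Es p \<Longrightarrow> x \<notin> set (butlast p) \<Longrightarrow> wk (Es - {(x,z)}) p"
proof (induction p)
  case Nil then show ?case by simp
next
  case (Cons a p)
  then show ?case by (cases p) (auto simp: successively_Cons split: if_splits)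
qed

lemma wk_remove_in: "wk Es p \<Longrightarrow> y \<notin> set (tl p) \<Longrightarrow> wk (Es - {(z,y)}) p"
proof (induction p)
  case Nil then show ?case by simp
next
  case (Cons a p)
  then show ?case by (cases p) (auto simp: successively_Cons)
qed

lemma wk_glue: "wk Es (xs @ [v]) \<Longrightarrow> wk Es (v # ys) \<Longrightarrow> wk Es (xs @ v # ys)"
  by (cases ys) (auto simp: successively_append_iff successively_Cons)

lemma wk_prefix: "wk Es (xs @ ys) \<Longrightarrow> wk Es xs"
  by (simp add: successively_append_iff)

lemma wk_suffix: "wk Es (xs @ ys) \<Longrightarrow> wk Es ys"
  by (simp add: successively_append_iff)

lemma prefix_abp:
  assumes "abp Es W A B p" "p = p1 @ v # p2" "v \<in> B'"
  shows "abp Es W A B' (p1 @ [v])"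
proof -
  have "wk Es ((p1 @ [v]) @ p2)" using assms(1,2) unfolding abp_def by simp
  then have "wk Es (p1 @ [v])" by (rule wk_prefix)
  moreover have "hd (p1 @ [v]) = hd p" using assms(2) by (cases p1) auto
  ultimately show ?thesis using assms unfolding abp_def by auto
qed

lemma suffix_abp:
  assumes "abp Es W A B p" "p = p1 @ v # p2" "v \<in> A'"
  shows "abp Es W A' B (v # p2)"
proof -
  have "wk Es (p1 @ (v # p2))" using assms(1,2) unfolding abp_def by simp
  then have "wk Es (v # p2)" by (rule wk_suffix)
  moreover have "last (v # p2) = last p" using assms(2) by simp
  ultimately show ?thesis using assms unfolding abp_def by auto
qed

lemma sep_transfer1:
  assumes S: "sep (Es - {(x,y)}) W A B S" and T: "sep (Es - {(x,y)}) W A (insert x S) T"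
  shows "sep Es W A B T"
  unfolding sep_def
proof (intro allI impI)
  fix p assume p: "abp Es W A B p"
  show "set p \<inter> T \<noteq> {}"
  proof (cases "x \<in> set p")
    case True
    then obtain p1 p2 where pp: "p = p1 @ x # p2" by (meson split_list)
    have a: "abp Es W A (insert x S) (p1 @ [x])" using prefix_abp[OF p pp] by simp
    have "x \<notin> set p1" using p pp unfolding abp_def by auto
    then have "wk (Es - {(x,y)}) (p1 @ [x])" using a wk_remove_out[of Es "p1 @ [x]" x y]
      unfolding abp_def by simp
    then have "abp (Es - {(x,y)}) W A (insert x S) (p1 @ [x])" using a unfolding abp_def by simp
    then have "set (p1 @ [x]) \<inter> T \<noteq> {}" using T unfolding sep_def by blast
    then show ?thesis using pp by auto
  next
    case False
    then have "x \<notin> set (butlast p)" by (meson in_set_butlastD)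
    then have "wk (Es - {(x,y)}) p" using p wk_remove_out[of Es p x y] unfolding abp_def by simp
    then have "abp (Es - {(x,y)}) W A B p" using p unfolding abp_def by simp
    then obtain s where s: "s \<in> set p" "s \<in> S" using S unfolding sep_def by blast
    then obtain p1 p2 where pp: "p = p1 @ s # p2" by (meson split_list)
    have "abp (Es - {(x,y)}) W A (insert x S) (p1 @ [s])"
      using prefix_abp[OF \<open>abp (Es - {(x,y)}) W A B p\<close> pp] s by simp
    then have "set (p1 @ [s]) \<inter> T \<noteq> {}" using T unfolding sep_def by blast
    then show ?thesis using pp by auto
  qed
qed

lemma sep_transfer2:
  assumes S: "sep (Es - {(x,y)}) W A B S" and T: "sep (Es - {(x,y)}) W (insert y S) B T"
  shows "sep Es W A B T"
  unfolding sep_def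
proof (intro allI impI)
  fix p assume p: "abp Es W A B p"
  show "set p \<inter> T \<noteq> {}"
  proof (cases "y \<in> set p")
    case True
    then obtain p1 p2 where pp: "p = p1 @ y # p2" by (meson split_list)
    have a: "abp Es W (insert y S) B (y # p2)" using suffix_abp[OF p pp] by simp
    have "y \<notin> set p2" using p pp unfolding abp_def by auto
    then have "wk (Es - {(x,y)}) (y # p2)" using a wk_remove_in[of Es "y # p2" y x]
      unfolding abp_def by simp
    then have "abp (Es - {(x,y)}) W (insert y S) B (y # p2)" using a unfolding abp_def by simp
    then have "set (y # p2) \<inter> T \<noteq> {}" using T unfolding sep_def by blast
    then show ?thesis using pp by auto
  next
    case False
    then have "y \<notin> set (tl p)" by (cases p) auto
    then have "wk (Es - {(x,y)}) p" using p wk_remove_in[of Es p y x] unfolding abp_def by simp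
    then have "abp (Es - {(x,y)}) W A B p" using p unfolding abp_def by simp
    then obtain s where s: "s \<in> set p" "s \<in> S" using S unfolding sep_def by blast
    then obtain p1 p2 where pp: "p = p1 @ s # p2" by (meson split_list)
    have "abp (Es - {(x,y)}) W (insert y S) B (s # p2)"
      using suffix_abp[OF \<open>abp (Es - {(x,y)}) W A B p\<close> pp] s by simp
    then have "set (s # p2) \<inter> T \<noteq> {}" using T unfolding sep_def by blast
    then show ?thesis using pp by auto
  qed
qed

lemma sep_insert1:
  assumes S: "sep (Es - {(x,y)}) W A B S"
  shows "sep Es W A B (insert x S)"
  unfolding sep_def
proof (intro allI impI)
  fix p assume p: "abp Es W A B p"
  show "set p \<inter> insert x S \<noteq> {}"
  proof (cases "x \<in> set p")
    case False
    then have "x \<notin> set (butlast p)" by (meson in_set_butlastD)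
    then have "wk (Es - {(x,y)}) p" using p wk_remove_out[of Es p x y] unfolding abp_def by simp
    then have "abp (Es - {(x,y)}) W A B p" using p unfolding abp_def by simp
    then show ?thesis using S unfolding sep_def by blast
  qed auto
qed

lemma sep_insert2:
  assumes S: "sep (Es - {(x,y)}) W A B S"
  shows "sep Es W A B (insert y S)"
  unfolding sep_def
proof (intro allI impI)
  fix p assume p: "abp Es W A B p"
  show "set p \<inter> insert y S \<noteq> {}"
  proof (cases "y \<in> set p")
    case False
    then have "y \<notin> set (tl p)" by (cases p) auto
    then have "wk (Es - {(x,y)}) p" using p wk_remove_in[of Es p y x] unfolding abp_def by simp
    then have "abp (Es - {(x,y)}) W A B p" using p unfolding abp_def by simp
    then show ?thesis using S unfolding sep_def by blast
  qed auto
qed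


lemma last_in_set': "p \<noteq> [] \<Longrightarrow> last p \<in> set p" by simp

lemma combine:
  assumes sepS: "sep Es' W A B S" and Es': "Es' \<subseteq> Es" and e: "(x,y) \<in> Es"
   and xS: "x \<notin> S" and yS: "y \<notin> S" and fin: "finite S"
   and P1f: "finite P1" and P1c: "card P1 = card (insert x S)"
   and P1a: "\<forall>p\<in>P1. abp Es' W A (insert x S) p" and P1d: "pdisj P1"
   and P2f: "finite P2" and P2c: "card P2 = card (insert y S)"
   and P2a: "\<forall>q\<in>P2. abp Es' W (insert y S) B q" and P2d: "pdisj P2"
  shows "\<exists>P. finite P \<and> card P = card (insert x S) \<and> (\<forall>p\<in>P. abp Es W A B p) \<and> pdisj P"
proof -
  define S1 where "S1 = insert x S"
  define S2 where "S2 = insert y S"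
  have injl: "inj_on last P1"
  proof (rule inj_onI)
    fix p p' assume "p \<in> P1" "p' \<in> P1" "last p = last p'"
    then show "p = p'" using P1d P1a unfolding pdisj_def abp_def
      by (metis disjoint_iff last_in_set)
  qed
  have l1: "last ` P1 = S1"
  proof (rule card_subset_eq)
    show "finite S1" using fin S1_def by simp
    show "last ` P1 \<subseteq> S1" using P1a S1_def unfolding abp_def by auto
    show "card (last ` P1) = card S1" using card_image[OF injl] P1c S1_def by simp
  qed
  have injh: "inj_on hd P2"
  proof (rule inj_onI)
    fix p p' assume "p \<in> P2" "p' \<in> P2" "hd p = hd p'"
    then show "p = p'" using P2d P2a unfolding pdisj_def abp_def
      by (metis disjoint_iff hd_in_set)
  qed
  have h2: "hd ` P2 = S2"
  proof (rule card_subset_eq)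
    show "finite S2" using fin S2_def by simp
    show "hd ` P2 \<subseteq> S2" using P2a S2_def unfolding abp_def by auto
    show "card (hd ` P2) = card S2" using card_image[OF injh] P2c S2_def by simp
  qed
  have only1: "set p \<inter> S1 \<subseteq> {last p}" if "p \<in> P1" for p
  proof
    fix s assume s: "s \<in> set p \<inter> S1"
    then obtain p' where p': "p' \<in> P1" "last p' = s" using l1 by (metis IntD2 imageE)
    have "p' \<noteq> []" using p' P1a unfolding abp_def by auto
    then have "s \<in> set p'" using p' by auto
    then have "p' = p" using P1d p' that s unfolding pdisj_def by blast
    then show "s \<in> {last p}" using p' by simp
  qed
  have only2: "set q \<inter> S2 \<subseteq> {hd q}" if "q \<in> P2" for q
  proof
    fix s assume s: "s \<in> set q \<inter> S2"
    then obtain q' where q': "q' \<in> P2" "hd q' = s" using h2 by (metis IntD2 imageE)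
    have "q' \<noteq> []" using q' P2a unfolding abp_def by auto
    then have "s \<in> set q'" using q' by auto
    then have "q' = q" using P2d q' that s unfolding pdisj_def by blast
    then show "s \<in> {hd q}" using q' by simp
  qed
  have NI: "v \<in> S \<and> v = last p \<and> v = hd q"
    if p: "p \<in> P1" and q: "q \<in> P2" and v: "v \<in> set p" "v \<in> set q" for p q v
  proof -
    obtain p1 p2 where pp: "p = p1 @ v # p2" using v by (meson split_list)
    obtain q1 q2 where qq: "q = q1 @ v # q2" using v by (meson split_list)
    have ap: "abp Es' W A S1 p" using P1a p S1_def by simp
    have aq: "abp Es' W S2 B q" using P2a q S2_def by simp
    have c: "(v = last p \<and> v \<in> S) \<or> (v = hd q \<and> v \<in> S)"
    proof (rule ccontr)
      assume nc: "\<not> ?thesis"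
      have A1: "set (p1 @ [v]) \<inter> S = {}"
      proof (cases "v = last p")
        case False
        then have "p2 \<noteq> []" using pp by auto
        then have "last p \<in> set p2" using pp by auto
        moreover have "distinct p" using ap unfolding abp_def by simp
        ultimately have "last p \<notin> set (p1 @ [v])" using pp by auto
        moreover have "set (p1 @ [v]) \<inter> S1 \<subseteq> {last p}" using only1[OF p] pp by auto
        ultimately show ?thesis using S1_def by auto
      next
        case True
        then have "v \<notin> S" using nc by auto
        moreover have "set (p1 @ [v]) \<inter> S1 \<subseteq> {last p}" using only1[OF p] pp by auto
        ultimately show ?thesis using S1_def True by auto
      qed
      have A2: "set (v # q2) \<inter> S = {}"
      proof (cases "v = hd q")
        case False
        then have "q1 \<noteq> []" using qq by auto
        then have "hd q \<in> set q1" using qq by auto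
        moreover have "distinct q" using aq unfolding abp_def by simp
        ultimately have "hd q \<notin> set (v # q2)" using qq by auto
        moreover have "set (v # q2) \<inter> S2 \<subseteq> {hd q}" using only2[OF q] qq by auto
        ultimately show ?thesis using S2_def by auto
      next
        case True
        then have "v \<notin> S" using nc by auto
        moreover have "set (v # q2) \<inter> S2 \<subseteq> {hd q}" using only2[OF q] qq by auto
        ultimately show ?thesis using S2_def True by auto
      qed
      have w1: "wk Es' (p1 @ [v])" using ap pp wk_prefix[of Es' "p1 @ [v]" p2] unfolding abp_def by simp
      have w2: "wk Es' (v # q2)" using aq qq wk_suffix[of Es' q1 "v # q2"] unfolding abp_def by simp
      have w: "wk Es' (p1 @ v # q2)" using wk_glue[OF w1 w2] .
      have "hd (p1 @ v # q2) = hd p" using pp by (cases p1) auto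
      then have hdw: "hd (p1 @ v # q2) \<in> A" using ap unfolding abp_def by simp
      have "last (p1 @ v # q2) = last q" using qq by simp
      then have lw: "last (p1 @ v # q2) \<in> B" using aq unfolding abp_def by simp
      have sw: "set (p1 @ v # q2) \<subseteq> W" using ap aq pp qq unfolding abp_def by auto
      have "set (p1 @ v # q2) \<inter> S \<noteq> {}" using sep_walk[OF sepS _ w sw hdw lw] by simp
      then show False using A1 A2 by auto
    qed
    then have vS: "v \<in> S" by auto
    then have "v = last p" using only1[OF p] v S1_def by auto
    moreover have "v = hd q" using only2[OF q] v S2_def vS by auto
    ultimately show ?thesis using vS by simp
  qed
  define pp where "pp = inv_into P1 last"
  define qq where "qq = inv_into P2 hd"
  have pp: "pp s \<in> P1 \<and> last (pp s) = s" if "s \<in> S1" for s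
    using that l1 unfolding pp_def by (metis f_inv_into_f inv_into_into)
  have qq: "qq s \<in> P2 \<and> hd (qq s) = s" if "s \<in> S2" for s
    using that h2 unfolding qq_def by (metis f_inv_into_f inv_into_into)
  define \<sigma> where "\<sigma> s = (if s = x then y else s)" for s
  have \<sigma>S: "\<sigma> s \<in> S2" if "s \<in> S1" for s using that unfolding \<sigma>_def S1_def S2_def by auto
  define g where "g s = (if s = x then pp x @ qq y else butlast (pp s) @ qq s)" for s
  have gset: "set (g s) \<subseteq> set (pp s) \<union> set (qq (\<sigma> s))" for s
    unfolding g_def \<sigma>_def by (auto dest: in_set_butlastD)
  have gabp: "abp Es W A B (g s)" if s: "s \<in> S1" for s
  proof (cases "s = x")
    case True
    have px: "pp x \<in> P1" "last (pp x) = x" using pp[of x] S1_def by auto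
    have qy: "qq y \<in> P2" "hd (qq y) = y" using qq[of y] S2_def by auto
    have ap: "abp Es' W A S1 (pp x)" using P1a px S1_def by simp
    have aq: "abp Es' W S2 B (qq y)" using P2a qy S2_def by simp
    have dis: "set (pp x) \<inter> set (qq y) = {}"
    proof (rule ccontr)
      assume "set (pp x) \<inter> set (qq y) \<noteq> {}"
      then obtain v where "v \<in> set (pp x)" "v \<in> set (qq y)" by blast
      then have "v \<in> S \<and> v = x" using NI[OF px(1) qy(1)] px by simp
      then show False using xS by auto
    qed
    have "wk Es (pp x)" "wk Es (qq y)" using ap aq wk_mono[OF _ Es'] unfolding abp_def by auto
    then have "wk Es (pp x @ qq y)" using px qy e ap aq unfolding abp_def
      by (auto simp: successively_append_iff)
    moreover have "hd (pp x @ qq y) = hd (pp x)" using ap unfolding abp_def by simp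
    moreover have "last (pp x @ qq y) = last (qq y)" using aq unfolding abp_def by simp
    ultimately show ?thesis using True ap aq dis unfolding g_def abp_def by auto
  next
    case False
    then have sS: "s \<in> S" using s S1_def by simp
    have ps: "pp s \<in> P1" "last (pp s) = s" using pp[of s] s by auto
    have qs: "qq s \<in> P2" "hd (qq s) = s" using qq[of s] sS S2_def by auto
    have ap: "abp Es' W A S1 (pp s)" using P1a ps S1_def by simp
    have aq: "abp Es' W S2 B (qq s)" using P2a qs S2_def by simp
    have pdec: "pp s = butlast (pp s) @ [s]" using ps ap unfolding abp_def
      by (metis append_butlast_last_id)
    have qdec: "qq s = s # tl (qq s)" using qs aq unfolding abp_def
      by (metis list.collapse)
    have w: "wk Es' (butlast (pp s) @ s # tl (qq s))"
      using wk_glue[of Es' "butlast (pp s)" s "tl (qq s)"] ap aq pdec qdec unfolding abp_def by metis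
    have gs: "g s = butlast (pp s) @ s # tl (qq s)" unfolding g_def using False qdec by metis
    have dp: "distinct (pp s)" "distinct (qq s)" using ap aq unfolding abp_def by auto
    have dis: "set (butlast (pp s)) \<inter> set (qq s) = {}"
    proof (rule ccontr)
      assume "set (butlast (pp s)) \<inter> set (qq s) \<noteq> {}"
      then obtain v where v: "v \<in> set (butlast (pp s))" "v \<in> set (qq s)" by blast
      then have "v = s" using NI[OF ps(1) qs(1)] ps by (auto dest: in_set_butlastD)
      then show False using v dp pdec by (metis distinct_append not_distinct_conv_prefix)
    qed
    have "hd (g s) = hd (pp s)" using gs pdec by (cases "butlast (pp s)") auto
    moreover have "last (g s) = last (qq s)" using gs qdec by (metis last_appendR list.simps(3))
    moreover have "distinct (g s)"
    proof -
      have g2: "g s = butlast (pp s) @ qq s" using gs qdec by metis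
      show ?thesis unfolding g2 using dp dis by (simp add: distinct_butlast)
    qed
    moreover have "set (g s) \<subseteq> W" using gset[of s] ap aq \<sigma>_def False unfolding abp_def by auto
    moreover have "wk Es (g s)" using gs w wk_mono[OF _ Es'] by simp
    ultimately show ?thesis using ap aq unfolding abp_def by (simp add: gs)
  qed
  have gdis: "set (g s) \<inter> set (g t) = {}" if st: "s \<in> S1" "t \<in> S1" "s \<noteq> t" for s t
  proof (rule ccontr)
    assume "set (g s) \<inter> set (g t) \<noteq> {}"
    then obtain v where v: "v \<in> set (g s)" "v \<in> set (g t)" by blast
    have ps: "pp s \<in> P1" "last (pp s) = s" and pt: "pp t \<in> P1" "last (pp t) = t"
      using pp st by auto
    have qs: "qq (\<sigma> s) \<in> P2" "hd (qq (\<sigma> s)) = \<sigma> s" and qt: "qq (\<sigma> t) \<in> P2" "hd (qq (\<sigma> t)) = \<sigma> t"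
      using qq \<sigma>S st by auto
    have \<sigma>inj: "\<sigma> s \<noteq> \<sigma> t" using st yS xS unfolding \<sigma>_def S1_def by auto
    have \<sigma>fix: "\<sigma> u \<in> S \<Longrightarrow> \<sigma> u = u" for u using yS unfolding \<sigma>_def by auto
    have "pp s \<noteq> pp t" using ps pt st by metis
    then have d1: "set (pp s) \<inter> set (pp t) = {}" using P1d ps pt unfolding pdisj_def by blast
    have "qq (\<sigma> s) \<noteq> qq (\<sigma> t)" using qs qt \<sigma>inj by metis
    then have d2: "set (qq (\<sigma> s)) \<inter> set (qq (\<sigma> t)) = {}" using P2d qs qt unfolding pdisj_def by blast
    show False
    proof (cases "v \<in> set (pp s)")
      case True
      then show False
      proof (cases "v \<in> set (pp t)")
        case False
        then have "v \<in> set (qq (\<sigma> t))" using v gset by blast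
        then have "v \<in> S \<and> v = s \<and> v = \<sigma> t" using NI[OF ps(1) qt(1) True] ps qt by metis
        then show False using \<sigma>fix st by metis
      qed (use d1 in blast)
    next
      case False
      then have vq: "v \<in> set (qq (\<sigma> s))" using v gset by blast
      show False
      proof (cases "v \<in> set (pp t)")
        case True
        then have "v \<in> S \<and> v = t \<and> v = \<sigma> s" using NI[OF pt(1) qs(1) True vq] pt qs by metis
        then show False using \<sigma>fix st by metis
      next
        case False
        then have "v \<in> set (qq (\<sigma> t))" using v gset by blast
        then show False using vq d2 by blast
      qed
    qed
  qed
  have ginj: "inj_on g S1"
  proof (rule inj_onI)
    fix s t assume st: "s \<in> S1" "t \<in> S1" "g s = g t"
    show "s = t"
    proof (rule ccontr)
      assume "s \<noteq> t"
      then have "set (g s) \<inter> set (g t) = {}" using gdis st by blast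
      moreover have "g s \<noteq> []" using gabp st unfolding abp_def by blast
      ultimately show False using st by (metis inf.idem set_empty)
    qed
  qed
  show ?thesis
  proof (intro exI conjI)
    show "finite (g ` S1)" using fin S1_def by simp
    show "card (g ` S1) = card (insert x S)" using card_image[OF ginj] S1_def by simp
    show "\<forall>p\<in>g ` S1. abp Es W A B p" using gabp by blast
    show "pdisj (g ` S1)" unfolding pdisj_def using gdis by blast
  qed
qed


lemma abp_mono: "abp Es' W A B p \<Longrightarrow> Es' \<subseteq> Es \<Longrightarrow> abp Es W A B p"
  unfolding abp_def using wk_mono by blast

lemma menger:
  assumes "finite W" "Es \<subseteq> W \<times> W" "\<forall>T. finite T \<and> sep Es W A B T \<longrightarrow> k \<le> card T"
  shows "\<exists>P. finite P \<and> card P = k \<and> (\<forall>p\<in>P. abp Es W A B p) \<and> pdisj P"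
  using assms
proof (induction "card Es" arbitrary: Es A B rule: less_induct)
  case less
  have finE: "finite Es" using less.prems(1,2) by (meson finite_SigmaI finite_subset)
  show ?case
  proof (cases "Es = {}")
    case True
    let ?T = "A \<inter> B \<inter> W"
    have "sep Es W A B ?T"
      unfolding sep_def
    proof (intro allI impI)
      fix p assume h: "abp Es W A B p"
      then obtain v p' where pv: "p = v # p'" unfolding abp_def by (cases p) auto
      with h True have "p' = []" unfolding abp_def by (auto simp: successively_Cons)
      then show "set p \<inter> ?T \<noteq> {}" using h pv unfolding abp_def by auto
    qed
    then have "k \<le> card ?T" using less.prems(1,3) by auto
    moreover have "finite ?T" using less.prems(1) by simp
    ultimately obtain T where T: "T \<subseteq> ?T" "card T = k"
      by (meson obtain_subset_with_card_n)
    have fT: "finite T" using T \<open>finite ?T\<close> finite_subset by blast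
    let ?P = "(\<lambda>v. [v]) ` T"
    show ?thesis
    proof (intro exI conjI)
      show "finite ?P" using fT by simp
      show "card ?P = k" using T by (simp add: card_image inj_on_def)
      show "\<forall>p\<in>?P. abp Es W A B p" using T unfolding abp_def by auto
      show "pdisj ?P" unfolding pdisj_def by auto
    qed
  next
    case False
    then obtain x y where e: "(x,y) \<in> Es" by auto
    let ?Es' = "Es - {(x,y)}"
    have lt: "card ?Es' < card Es" using e finE by (meson card_Diff1_less)
    have sub': "?Es' \<subseteq> W \<times> W" using less.prems(2) by auto
    show ?thesis
    proof (cases "\<forall>T. finite T \<and> sep ?Es' W A B T \<longrightarrow> k \<le> card T")
      case True
      from less.hyps[OF lt less.prems(1) sub' True] obtain P where
        P: "finite P" "card P = k" "\<forall>p\<in>P. abp ?Es' W A B p" "pdisj P" by blast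
      then show ?thesis using abp_mono[of ?Es' W A B _ Es] by blast
    next
      case False
      then obtain S where S: "finite S" "sep ?Es' W A B S" "card S < k" by auto
      have s1: "sep Es W A B (insert x S)" using sep_insert1[OF S(2)] .
      have s2: "sep Es W A B (insert y S)" using sep_insert2[OF S(2)] .
      have c1: "k \<le> card (insert x S)" using s1 S(1) less.prems(3) by auto
      have c2: "k \<le> card (insert y S)" using s2 S(1) less.prems(3) by auto
      have xS: "x \<notin> S" using c1 S by (metis insert_absorb not_le)
      have yS: "y \<notin> S" using c2 S by (metis insert_absorb not_le)
      have k1: "card (insert x S) = k" using c1 S xS by simp
      have k2: "card (insert y S) = k" using c2 S yS by simp
      have h1: "\<forall>T. finite T \<and> sep ?Es' W A (insert x S) T \<longrightarrow> k \<le> card T"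
        using sep_transfer1[OF S(2)] less.prems(3) by blast
      have h2: "\<forall>T. finite T \<and> sep ?Es' W (insert y S) B T \<longrightarrow> k \<le> card T"
        using sep_transfer2[OF S(2)] less.prems(3) by blast
      from less.hyps[OF lt less.prems(1) sub' h1] obtain P1 where
        P1: "finite P1" "card P1 = k" "\<forall>p\<in>P1. abp ?Es' W A (insert x S) p" "pdisj P1" by blast
      from less.hyps[OF lt less.prems(1) sub' h2] obtain P2 where
        P2: "finite P2" "card P2 = k" "\<forall>p\<in>P2. abp ?Es' W (insert y S) B p" "pdisj P2" by blast
      have "\<exists>P. finite P \<and> card P = card (insert x S) \<and> (\<forall>p\<in>P. abp Es W A B p) \<and> pdisj P"
        by (rule combine[OF S(2) _ e xS yS S(1) P1(1) _ P1(3,4) P2(1) _ P2(3,4)])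
           (use k1 k2 P1 P2 in auto)
      then show ?thesis using k1 by simp
    qed
  qed
qed


lemma dpath_wk: "dpath E p x y \<longleftrightarrow> p \<noteq> [] \<and> hd p = x \<and> last p = y \<and> distinct p \<and> wk E p"
  unfolding dpath_def successively_conv_nth by blast

lemma crossing:
  "wk E p \<Longrightarrow> p \<noteq> [] \<Longrightarrow> hd p \<notin> D \<Longrightarrow> last p \<in> D \<Longrightarrow> \<exists>c\<in>set p. c \<notin> D \<and> (\<exists>w\<in>D. (c,w) \<in> E)"
proof (induction p)
  case Nil then show ?case by simp
next
  case (Cons a p)
  show ?case
  proof (cases "p = []")
    case True then show ?thesis using Cons by simp
  next
    case False
    then have e: "(a, hd p) \<in> E" "wk E p" using Cons.prems(1) by (auto simp: successively_Cons)
    show ?thesis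
    proof (cases "hd p \<in> D")
      case True then show ?thesis using e Cons.prems by auto
    next
      case nd: False
      have "last p \<in> D" using Cons.prems False by simp
      then show ?thesis using Cons.IH[OF e(2) False nd] by auto
    qed
  qed
qed

lemma rtrancl_walk:
  "(u,v) \<in> Es\<^sup>* \<Longrightarrow> \<exists>p. p \<noteq> [] \<and> wk Es p \<and> hd p = u \<and> last p = v \<and> set p \<subseteq> insert u (Range Es)"
proof (induction rule: rtrancl_induct)
  case base
  then show ?case by (intro exI[of _ "[u]"]) auto
next
  case (step w v)
  then obtain p where p: "p \<noteq> [] \<and> wk Es p \<and> hd p = u \<and> last p = w \<and> set p \<subseteq> insert u (Range Es)" by blast
  show ?case
  proof (intro exI[of _ "p @ [v]"] conjI)
    show "wk Es (p @ [v])" using p step.hyps(2) by (auto simp: successively_append_iff)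
    show "set (p @ [v]) \<subseteq> insert u (Range Es)" using p step.hyps(2) by auto
  qed (use p in auto)
qed

lemma rtrancl_dpath:
  assumes "(u,v) \<in> Es\<^sup>*"
  shows "\<exists>p. p \<noteq> [] \<and> distinct p \<and> wk Es p \<and> hd p = u \<and> last p = v \<and> set p \<subseteq> insert u (Range Es)"
proof -
  obtain w where w: "w \<noteq> [] \<and> wk Es w \<and> hd w = u \<and> last w = v \<and> set w \<subseteq> insert u (Range Es)"
    using rtrancl_walk[OF assms] by blast
  then obtain p where "p \<noteq> [] \<and> distinct p \<and> wk Es p \<and> hd p = hd w \<and> last p = last w \<and> set p \<subseteq> set w"
    using walk_to_path by blast
  then show ?thesis using w by auto
qed

lemma lemG:
  assumes finV: "finite V" and EV: "E \<subseteq> V \<times> V" and FV: "F \<subseteq> V" and cardF: "card F \<le> f"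
    and cond: "\<forall>X Y Z. X \<union> Y \<union> Z = V \<and> X \<inter> Y = {} \<and> X \<inter> Z = {} \<and> Y \<inter> Z = {}
                 \<and> X \<noteq> {} \<and> Y \<noteq> {} \<and> card Z \<le> f
                 \<longrightarrow> reach E f X Y Z \<or> reach E f Y X Z"
    and U: "U \<noteq> {}" "U \<subseteq> V - F" and C: "finite C" "card C \<le> f"
    and bd: "\<forall>x u. (x,u) \<in> E \<longrightarrow> u \<in> U \<longrightarrow> x \<in> V - F \<longrightarrow> x \<notin> U \<longrightarrow> x \<in> C"
  shows "\<exists>S. S \<noteq> {} \<and> S \<subseteq> U \<and> reach E f S (V - F - S) F \<and> strongly_conn_minus E F S"
proof -
  define Q where "Q D \<longleftrightarrow> D \<noteq> {} \<and> D \<subseteq> U \<and> (\<forall>x u. (x,u) \<in> E \<longrightarrow> u \<in> D \<longrightarrow> x \<in> V - F \<longrightarrow> x \<notin> D \<longrightarrow> x \<in> C)" for D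
  have QU: "Q U" using U bd Q_def by auto
  define m where "m = (LEAST n. \<exists>D. Q D \<and> card D = n)"
  obtain D where D: "Q D" "card D = m"
    using LeastI_ex[of "\<lambda>n. \<exists>D. Q D \<and> card D = n"] QU m_def by blast
  have minD: "card D \<le> card D'" if "Q D'" for D'
  proof -
    have "m \<le> card D'" unfolding m_def by (rule Least_le) (use that in blast)
    then show ?thesis using D(2) by simp
  qed
  have DU: "D \<noteq> {}" "D \<subseteq> U" and Dbd: "\<forall>x u. (x,u) \<in> E \<longrightarrow> u \<in> D \<longrightarrow> x \<in> V - F \<longrightarrow> x \<notin> D \<longrightarrow> x \<in> C"
    using D(1) Q_def by auto
  have DR: "D \<subseteq> V - F" using DU U by auto
  have finD: "finite D" using DR finV finite_subset by blast
  have sc: "(v,u) \<in> (E \<inter> D \<times> D)\<^sup>*" if uv: "u \<in> D" "v \<in> D" for u v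
  proof -
    define Du where "Du = {w \<in> D. (w,u) \<in> (E \<inter> D \<times> D)\<^sup>*}"
    have "Q Du" unfolding Q_def
    proof (intro conjI allI impI)
      show "Du \<noteq> {}" using uv by (auto simp: Du_def)
      show "Du \<subseteq> U" using DU Du_def by auto
      fix x w assume xw: "(x,w) \<in> E" "w \<in> Du" "x \<in> V - F" "x \<notin> Du"
      show "x \<in> C"
      proof (cases "x \<in> D")
        case True
        have "(x,w) \<in> E \<inter> D \<times> D" using True xw Du_def by auto
        moreover have "(w,u) \<in> (E \<inter> D \<times> D)\<^sup>*" using xw Du_def by auto
        ultimately have "(x,u) \<in> (E \<inter> D \<times> D)\<^sup>*" by (rule converse_rtrancl_into_rtrancl)
        then have "x \<in> Du" using True Du_def by auto
        then show ?thesis using xw by simp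
      next
        case False
        then show ?thesis using Dbd xw Du_def by auto
      qed
    qed
    then have "card D \<le> card Du" by (rule minD)
    moreover have "Du \<subseteq> D" using Du_def by auto
    ultimately have "Du = D" using finD by (meson card_seteq)
    then show ?thesis using uv Du_def by auto
  qed
  have scm: "strongly_conn_minus E F D"
    unfolding strongly_conn_minus_def
  proof (intro ballI)
    fix i j assume ij: "i \<in> D" "j \<in> D"
    then obtain p where p: "p \<noteq> [] \<and> distinct p \<and> wk (E \<inter> D \<times> D) p \<and> hd p = i \<and> last p = j
        \<and> set p \<subseteq> insert i (Range (E \<inter> D \<times> D))"
      using rtrancl_dpath[OF sc[OF ij(2) ij(1)]] by blast
    have "set p \<subseteq> D" using p ij by auto
    then have "set p \<inter> F = {}" using DR by auto
    moreover have "dpath E p i j" unfolding dpath_wk using p wk_mono[of "E \<inter> D \<times> D" p E] by auto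
    ultimately show "\<exists>p. dpath E p i j \<and> set p \<inter> F = {}" by blast
  qed
  have rch: "reach E f D (V - F - D) F"
  proof (cases "V - F - D = {}")
    case True then show ?thesis unfolding reach_def by simp
  next
    case False
    have "D \<union> (V - F - D) \<union> F = V" using DR FV by auto
    then have "reach E f D (V - F - D) F \<or> reach E f (V - F - D) D F"
      using cond False DU cardF DR by blast
    moreover have "\<not> reach E f (V - F - D) D F"
    proof
      assume r: "reach E f (V - F - D) D F"
      obtain u where u: "u \<in> D" using DU by blast
      from r u obtain P where P: "finite P" "f + 1 \<le> card P"
        "\<forall>p\<in>P. XY_path_excl E (V - F - D) u F p"
        "\<forall>p\<in>P. \<forall>q\<in>P. p \<noteq> q \<longrightarrow> set p \<inter> set q = {u}"
        unfolding reach_def by blast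
      have "\<forall>p\<in>P. \<exists>c. c \<in> set p \<and> c \<in> C \<and> c \<noteq> u"
      proof
        fix p assume "p \<in> P"
        then obtain x where x: "x \<in> V - F - D" "dpath E p x u" "set p \<inter> F = {}"
          using P(3) unfolding XY_path_excl_def by blast
        then have pp: "p \<noteq> []" "hd p = x" "last p = u" "wk E p" unfolding dpath_wk by auto
        obtain c w where cw: "c \<in> set p" "c \<notin> D" "w \<in> D" "(c,w) \<in> E"
          using crossing[OF pp(4) pp(1), of D] pp x u by auto
        have "c \<in> V" using cw EV by auto
        moreover have "c \<notin> F" using cw x by auto
        ultimately have "c \<in> C" using Dbd cw by auto
        then show "\<exists>c. c \<in> set p \<and> c \<in> C \<and> c \<noteq> u" using cw u by metis
      qed
      then obtain g where g: "\<forall>p\<in>P. g p \<in> set p \<and> g p \<in> C \<and> g p \<noteq> u" by metis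
      have "inj_on g P"
      proof (rule inj_onI)
        fix p q assume pq: "p \<in> P" "q \<in> P" "g p = g q"
        show "p = q"
        proof (rule ccontr)
          assume "p \<noteq> q"
          then have "set p \<inter> set q = {u}" using P(4) pq by blast
          moreover have "g p \<in> set p \<inter> set q" using g pq by (metis IntI)
          ultimately show False using g pq by auto
        qed
      qed
      then have "card P = card (g ` P)" by (simp add: card_image)
      also have "\<dots> \<le> card C" using g C(1) by (intro card_mono) auto
      finally show False using P(2) C(2) by simp
    qed
    ultimately show ?thesis by blast
  qed
  show ?thesis using DU rch scm by blast
qed

lemma part3:
  assumes finV: "finite V" and EV: "E \<subseteq> V \<times> V" and FV: "F \<subseteq> V" and cardF: "card F \<le> f"
    and fpos: "f > 0"
    and cond: "\<forall>X Y Z. X \<union> Y \<union> Z = V \<and> X \<inter> Y = {} \<and> X \<inter> Z = {} \<and> Y \<inter> Z = {}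
                 \<and> X \<noteq> {} \<and> Y \<noteq> {} \<and> card Z \<le> f
                 \<longrightarrow> reach E f X Y Z \<or> reach E f Y X Z"
    and ne: "V - F \<noteq> {}" and k: "k \<in> F"
  shows "f + 1 \<le> card {i \<in> V - F. (i, k) \<in> E}"
proof -
  have finF: "finite F" using FV finV finite_subset by blast
  have "card (F - {k}) \<le> f" using cardF finF by (meson card_Diff1_le le_trans)
  moreover have "{k} \<union> (V - F) \<union> (F - {k}) = V" using k FV by auto
  ultimately have "reach E f {k} (V - F) (F - {k}) \<or> reach E f (V - F) {k} (F - {k})"
    by (intro cond[rule_format]) (use ne k in auto)
  moreover have "\<not> reach E f {k} (V - F) (F - {k})"
  proof
    assume r: "reach E f {k} (V - F) (F - {k})"
    obtain y where y: "y \<in> V - F" using ne by blast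
    from r y obtain P where P: "finite P" "f + 1 \<le> card P"
        "\<forall>p\<in>P. XY_path_excl E {k} y (F - {k}) p"
        "\<forall>p\<in>P. \<forall>q\<in>P. p \<noteq> q \<longrightarrow> set p \<inter> set q = {y}"
      unfolding reach_def by blast
    have "\<not> card P \<le> Suc 0" using P(2) fpos by simp
    then obtain p q where pq: "p \<in> P" "q \<in> P" "p \<noteq> q" using card_le_Suc0_iff_eq[OF P(1)] by blast
    have "k \<in> set p" "k \<in> set q" using P(3) pq unfolding XY_path_excl_def dpath_wk
      by (metis hd_in_set singletonD)+
    then have "k = y" using P(4) pq by blast
    then show False using k y by simp
  qed
  ultimately have r: "reach E f (V - F) {k} (F - {k})" by blast
  from r obtain P where P: "finite P" "f + 1 \<le> card P"
      "\<forall>p\<in>P. XY_path_excl E (V - F) k (F - {k}) p"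
      "\<forall>p\<in>P. \<forall>q\<in>P. p \<noteq> q \<longrightarrow> set p \<inter> set q = {k}"
    unfolding reach_def by blast
  let ?I = "{i \<in> V - F. (i, k) \<in> E}"
  have "\<forall>p\<in>P. \<exists>c. c \<in> set p \<and> c \<noteq> k \<and> c \<in> ?I"
  proof
    fix p assume "p \<in> P"
    then obtain x where x: "x \<in> V - F" "dpath E p x k" "set p \<inter> (F - {k}) = {}"
      using P(3) unfolding XY_path_excl_def by blast
    then have pp: "p \<noteq> []" "hd p = x" "last p = k" "wk E p" unfolding dpath_wk by auto
    have "hd p \<notin> {k}" using pp x k by auto
    then obtain c w where cw: "c \<in> set p" "c \<notin> {k}" "w \<in> {k}" "(c,w) \<in> E"
      using crossing[OF pp(4) pp(1), of "{k}"] pp by auto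
    have "c \<in> V" using cw EV by auto
    moreover have "c \<notin> F" using cw x by auto
    ultimately show "\<exists>c. c \<in> set p \<and> c \<noteq> k \<and> c \<in> ?I" using cw by auto
  qed
  then obtain g where g: "\<forall>p\<in>P. g p \<in> set p \<and> g p \<noteq> k \<and> g p \<in> ?I" by metis
  have "inj_on g P"
  proof (rule inj_onI)
    fix p q assume pq: "p \<in> P" "q \<in> P" "g p = g q"
    show "p = q"
    proof (rule ccontr)
      assume "p \<noteq> q"
      then have "set p \<inter> set q = {k}" using P(4) pq by blast
      moreover have "g p \<in> set p \<inter> set q" using g pq by (metis IntI)
      ultimately show False using g pq by auto
    qed
  qed
  then have "card P = card (g ` P)" by (simp add: card_image)
  also have "\<dots> \<le> card ?I" using g finV by (intro card_mono) auto
  finally show ?thesis using P(2) by simp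
qed


lemma part1_U:
  assumes finV: "finite V" and EV: "E \<subseteq> V \<times> V" and FV: "F \<subseteq> V"
    and AB: "A \<union> B = V - F" and ABdisj: "A \<inter> B = {}" and Ane: "A \<noteq> {}"
    and nr: "\<not> reach E f B A F"
  shows "\<exists>U C. U \<noteq> {} \<and> U \<subseteq> A \<and> finite C \<and> card C \<le> f \<and>
           (\<forall>x u. (x,u) \<in> E \<longrightarrow> u \<in> U \<longrightarrow> x \<in> V - F \<longrightarrow> x \<notin> U \<longrightarrow> x \<in> C)"
proof -
  from nr Ane obtain a0 where a0: "a0 \<in> A" and na: "\<not> (\<exists>P. finite P \<and> f + 1 \<le> card P \<and>
      (\<forall>p\<in>P. XY_path_excl E B a0 F p) \<and> (\<forall>p\<in>P. \<forall>q\<in>P. p \<noteq> q \<longrightarrow> set p \<inter> set q = {a0}))"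
    unfolding reach_def by blast
  have a0R: "a0 \<in> V - F" "a0 \<notin> B" using a0 AB ABdisj by auto
  define W where "W = V - F - {a0}"
  define Es where "Es = E \<inter> W \<times> W"
  define In where "In = {u. (u, a0) \<in> E}"
  have "\<exists>T. finite T \<and> sep Es W B In T \<and> card T < f + 1"
  proof (rule ccontr)
    assume "\<not> ?thesis"
    then have h: "\<forall>T. finite T \<and> sep Es W B In T \<longrightarrow> f + 1 \<le> card T" by auto
    have "finite W" using finV W_def by simp
    moreover have "Es \<subseteq> W \<times> W" using Es_def by auto
    ultimately obtain P where P: "finite P" "card P = f + 1" "\<forall>p\<in>P. abp Es W B In p" "pdisj P"
      using menger[OF _ _ h] by blast
    let ?P = "(\<lambda>p. p @ [a0]) ` P"
    have "finite ?P" using P by simp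
    moreover have "card ?P = f + 1" using P by (simp add: card_image inj_on_def)
    moreover have "\<forall>q\<in>?P. XY_path_excl E B a0 F q"
    proof
      fix q assume "q \<in> ?P"
      then obtain p where p: "p \<in> P" "q = p @ [a0]" by blast
      have ap: "abp Es W B In p" using P p by blast
      have "wk E p" using ap wk_mono[of Es p E] Es_def unfolding abp_def by auto
      moreover have "(last p, a0) \<in> E" using ap In_def unfolding abp_def by auto
      ultimately have "wk E (p @ [a0])" by (auto simp: successively_append_iff)
      moreover have "a0 \<notin> set p" using ap W_def unfolding abp_def by auto
      ultimately have "dpath E q (hd p) a0" unfolding dpath_wk using ap p unfolding abp_def by auto
      moreover have "hd p \<in> B" using ap unfolding abp_def by auto
      moreover have "set q \<inter> F = {}" using ap p a0R W_def unfolding abp_def by auto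
      ultimately show "XY_path_excl E B a0 F q" unfolding XY_path_excl_def using a0R by blast
    qed
    moreover have "\<forall>q\<in>?P. \<forall>q'\<in>?P. q \<noteq> q' \<longrightarrow> set q \<inter> set q' = {a0}"
    proof (intro ballI impI)
      fix q q' assume qq: "q \<in> ?P" "q' \<in> ?P" "q \<noteq> q'"
      then obtain p p' where pp: "p \<in> P" "q = p @ [a0]" "p' \<in> P" "q' = p' @ [a0]" by blast
      then have "p \<noteq> p'" using qq by blast
      then have "set p \<inter> set p' = {}" using P(4) pp unfolding pdisj_def by blast
      then show "set q \<inter> set q' = {a0}" using pp by auto
    qed
    ultimately show False using na by (metis order_refl)
  qed
  then obtain T where T: "finite T" "sep Es W B In T" "card T < f + 1" by blast
  define C where "C = T \<inter> W"
  define Er where "Er = E \<inter> (V - F - C) \<times> (V - F - C)"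
  define U where "U = {u. (u, a0) \<in> Er\<^sup>*}"
  have a0C: "a0 \<notin> C" using C_def W_def by auto
  have UR: "u \<in> V - F - C" if "u \<in> U" for u
  proof (cases "u = a0")
    case True then show ?thesis using a0R a0C by simp
  next
    case False
    have "(u,a0) \<in> Er\<^sup>*" using that U_def by simp
    then show ?thesis
    proof (cases rule: converse_rtranclE)
      case base then show ?thesis using False by simp
    next
      case (step z) then show ?thesis using Er_def by auto
    qed
  qed
  have UA: "U \<subseteq> A"
  proof
    fix u assume uU: "u \<in> U"
    show "u \<in> A"
    proof (rule ccontr)
      assume "u \<notin> A"
      then have uB: "u \<in> B" using UR[OF uU] AB by auto
      then have ua: "u \<noteq> a0" using a0R by auto
      obtain p where p: "p \<noteq> [] \<and> distinct p \<and> wk Er p \<and> hd p = u \<and> last p = a0 \<and> set p \<subseteq> insert u (Range Er)"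
        using rtrancl_dpath[of u a0 Er] uU U_def by auto
      have sp: "set p \<subseteq> V - F - C" using p UR[OF uU] Er_def by auto
      define p' where "p' = butlast p"
      have pd: "p = p' @ [a0]" using p p'_def by (metis append_butlast_last_id)
      have p'ne: "p' \<noteq> []" using pd p ua by auto
      have dpa: "distinct (p' @ [a0])" using p pd by auto
      then have dp': "distinct p'" "a0 \<notin> set p'" by auto
      have sp': "set p' \<subseteq> W" using sp dp' pd W_def by auto
      have wp: "wk Er (p' @ [a0])" using p pd by auto
      then have "wk Er p'" by (rule wk_prefix)
      then have "wk Es p'" 
        by (rule successively_mono) (use sp' Er_def Es_def in auto)
      moreover have "(last p', a0) \<in> Er" using wp p'ne by (auto simp: successively_append_iff)
      then have "last p' \<in> In" using Er_def In_def by auto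
      moreover have "hd p' \<in> B" using pd p p'ne uB by (metis hd_append2)
      ultimately have "abp Es W B In p'" using p'ne dp' sp' unfolding abp_def by auto
      then have "set p' \<inter> T \<noteq> {}" using T(2) unfolding sep_def by blast
      then have "set p' \<inter> C \<noteq> {}" using sp' C_def by auto
      then show False using sp pd by auto
    qed
  qed
  have bd: "\<forall>x u. (x,u) \<in> E \<longrightarrow> u \<in> U \<longrightarrow> x \<in> V - F \<longrightarrow> x \<notin> U \<longrightarrow> x \<in> C"
  proof (intro allI impI)
    fix x u assume xu: "(x,u) \<in> E" "u \<in> U" "x \<in> V - F" "x \<notin> U"
    show "x \<in> C"
    proof (rule ccontr)
      assume "x \<notin> C"
      then have "(x,u) \<in> Er" using xu UR Er_def by auto
      moreover have "(u,a0) \<in> Er\<^sup>*" using xu U_def by auto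
      ultimately have "x \<in> U" using U_def by (meson converse_rtrancl_into_rtrancl mem_Collect_eq)
      then show False using xu by simp
    qed
  qed
  have "U \<noteq> {}" using U_def by auto
  moreover have "finite C" using T C_def by simp
  moreover have "card C \<le> f" using T C_def card_mono[of T C] by auto
  ultimately show ?thesis using UA bd by blast
qed

lemma reach_monoY:
  assumes "reach E f X Y F" "Y' \<subseteq> Y"
  shows "reach E f X Y' F"
proof (cases "Y = {}")
  case True
  then show ?thesis using assms(2) unfolding reach_def by simp
next
  case False
  then have h: "\<forall>y\<in>Y. \<exists>P. finite P \<and> card P \<ge> f + 1 \<and> (\<forall>p\<in>P. XY_path_excl E X y F p) \<and>
        (\<forall>p\<in>P. \<forall>q\<in>P. p \<noteq> q \<longrightarrow> set p \<inter> set q = {y})" using assms(1) unfolding reach_def by blast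
  have "\<forall>y\<in>Y'. \<exists>P. finite P \<and> card P \<ge> f + 1 \<and> (\<forall>p\<in>P. XY_path_excl E X y F p) \<and>
        (\<forall>p\<in>P. \<forall>q\<in>P. p \<noteq> q \<longrightarrow> set p \<inter> set q = {y})"
  proof
    fix y assume "y \<in> Y'"
    then have "y \<in> Y" using assms(2) by blast
    then show "\<exists>P. finite P \<and> card P \<ge> f + 1 \<and> (\<forall>p\<in>P. XY_path_excl E X y F p) \<and>
        (\<forall>p\<in>P. \<forall>q\<in>P. p \<noteq> q \<longrightarrow> set p \<inter> set q = {y})" using h by blast
  qed
  then show ?thesis unfolding reach_def by blast
qed

theorem claim1:
  fixes V :: "'a set" and E :: "('a \<times> 'a) set" and f :: nat and F A B :: "'a set"
  assumes finV: "finite V"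
    and EV: "E \<subseteq> V \<times> V"
    and noloop: "\<forall>v. (v, v) \<notin> E"
    and cardV: "card V \<ge> 2"
    and fpos: "f > 0"
    and cond: "\<forall>X Y Z. X \<union> Y \<union> Z = V \<and> X \<inter> Y = {} \<and> X \<inter> Z = {} \<and> Y \<inter> Z = {}
                 \<and> X \<noteq> {} \<and> Y \<noteq> {} \<and> card Z \<le> f
                 \<longrightarrow> reach E f X Y Z \<or> reach E f Y X Z"
    and FV: "F \<subseteq> V" and cardF: "card F \<le> f"
    and AB: "A \<union> B = V - F" and ABdisj: "A \<inter> B = {}"
    and Ane: "A \<noteq> {}" and Bne: "B \<noteq> {}"
    and AtoB: "reach E f A B F"
  shows "(\<not> reach E f B A F \<longrightarrow>
            (\<exists>S. S \<noteq> {} \<and> S \<subseteq> A \<and> reach E f S (V - F - S) F \<and> strongly_conn_minus E F S))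
       \<and> (reach E f B A F \<longrightarrow>
            (\<exists>S. S \<noteq> {} \<and> S \<subseteq> A \<union> B \<and> reach E f S (V - F - S) F \<and> strongly_conn_minus E F S
                 \<and> reach E f A (S - A) F))
       \<and> (\<forall>k\<in>F. card {i \<in> V - F. (i, k) \<in> E} \<ge> f + 1)"
proof (intro conjI impI ballI)
  assume nr: "\<not> reach E f B A F"
  obtain U C where UC: "U \<noteq> {}" "U \<subseteq> A" "finite C" "card C \<le> f"
      "\<forall>x u. (x,u) \<in> E \<longrightarrow> u \<in> U \<longrightarrow> x \<in> V - F \<longrightarrow> x \<notin> U \<longrightarrow> x \<in> C"
    using part1_U[OF finV EV FV AB ABdisj Ane nr] by blast
  have "U \<subseteq> V - F" using UC AB by auto
  then obtain S where "S \<noteq> {} \<and> S \<subseteq> U \<and> reach E f S (V - F - S) F \<and> strongly_conn_minus E F S"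
    using lemG[OF finV EV FV cardF cond UC(1) _ UC(3,4,5)] by blast
  then show "\<exists>S. S \<noteq> {} \<and> S \<subseteq> A \<and> reach E f S (V - F - S) F \<and> strongly_conn_minus E F S"
    using UC(2) by blast
next
  have "V - F \<noteq> {}" using AB Ane by auto
  then obtain S where S: "S \<noteq> {} \<and> S \<subseteq> V - F \<and> reach E f S (V - F - S) F \<and> strongly_conn_minus E F S"
    using lemG[OF finV EV FV cardF cond _ _ finite.emptyI, of "V - F"] by auto
  have "S - A \<subseteq> B" using S AB by blast
  then have "reach E f A (S - A) F" using AtoB reach_monoY by blast
  then show "\<exists>S. S \<noteq> {} \<and> S \<subseteq> A \<union> B \<and> reach E f S (V - F - S) F \<and> strongly_conn_minus E F S
                 \<and> reach E f A (S - A) F" using S AB by blast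
next
  fix k assume "k \<in> F"
  moreover have "V - F \<noteq> {}" using AB Ane by auto
  ultimately show "f + 1 \<le> card {i \<in> V - F. (i, k) \<in> E}"
    using part3[OF finV EV FV cardF fpos cond] by blast
qed

end
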